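(* Let $X$ be a nonempty set of order $n \ge 3$, and let $NG$ be an NG-group on $X$ with associated directed multigraph $(NG)_{dig}$. Then $$\sum_{v \in X} \rho(v) \le 2 \cdot n!.$$
   Context: An NG-group on a set $X$ is a set of maps $X \to X$ that forms a group under composition of functions and is not contained in the symmetric group $\mathrm{Sym}(X)$. The directed multigraph $(NG)_{dig}$ has vertex set $X$. For every $f \in NG$ and every $x \in X$ there is one arc from $x$ to $f(x)$; this arc is a loop when $f(x) = x$. Arcs coming from different maps are distinct. The degree of a vertex is $\rho(v) = \rho^+(v) + \rho^-(v)$, the sum of its out-degree and its in-degree. A loop contributes $1$ to each. *)

theory Defs
  imports "HOL-Algebra.Group" "HOL-Library.FuncSet"
begin

definition NG_group :: "'a set \<Rightarrow> ('a \<Rightarrow> 'a) set \<Rightarrow> bool" where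
  "NG_group X NG \<longleftrightarrow>
     NG \<subseteq> (X \<rightarrow>\<^sub>E X) \<and>
     (\<exists>e. group \<lparr>carrier = NG, monoid.mult = (\<lambda>g f. compose X g f), one = e\<rparr>) \<and>
     \<not> NG \<subseteq> {f \<in> X \<rightarrow>\<^sub>E X. bij_betw f X X}"

text \<open>Arcs of (NG)_dig: one arc (f, x) from x to f x for every f in NG and x in X.\<close>

definition ng_arcs :: "'a set \<Rightarrow> ('a \<Rightarrow> 'a) set \<Rightarrow> (('a \<Rightarrow> 'a) \<times> 'a) set" where
  "ng_arcs X NG = NG \<times> X"

definition ng_outdeg :: "'a set \<Rightarrow> ('a \<Rightarrow> 'a) set \<Rightarrow> 'a \<Rightarrow> nat" where
  "ng_outdeg X NG v = card {a \<in> ng_arcs X NG. snd a = v}"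

definition ng_indeg :: "'a set \<Rightarrow> ('a \<Rightarrow> 'a) set \<Rightarrow> 'a \<Rightarrow> nat" where
  "ng_indeg X NG v = card {a \<in> ng_arcs X NG. fst a (snd a) = v}"

definition ng_deg :: "'a set \<Rightarrow> ('a \<Rightarrow> 'a) set \<Rightarrow> 'a \<Rightarrow> nat" where
  "ng_deg X NG v = ng_outdeg X NG v + ng_indeg X NG v"

end

theory Submission
  imports Defs "HOL-Combinatorics.Permutations"
begin

lemma card_NG_bound:
  assumes fin: "finite X" and ng: "NG_group X NG"
  shows "finite NG \<and> card NG \<le> fact (card X - 1)"
proof -
  from ng have sub: "NG \<subseteq> X \<rightarrow>\<^sub>E X"
    and nb: "\<not> NG \<subseteq> {f \<in> X \<rightarrow>\<^sub>E X. bij_betw f X X}"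
    and "\<exists>e. group \<lparr>carrier = NG, monoid.mult = (\<lambda>g f. compose X g f), one = e\<rparr>"
    unfolding NG_group_def by auto
  then obtain e where G: "group \<lparr>carrier = NG, monoid.mult = (\<lambda>g f. compose X g f), one = e\<rparr>"
    by blast
  define G where "G = \<lparr>carrier = NG, monoid.mult = (\<lambda>g f. compose X g f), one = e\<rparr>"
  have gG: "group G" using G G_def by simp
  have eN: "e \<in> NG" using group.is_monoid[OF gG] monoid.one_closed[of G] by (simp add: G_def)
  have lone: "compose X e f = f" if "f \<in> NG" for f
    using monoid.l_one[OF group.is_monoid[OF gG], of f] that by (simp add: G_def)
  have rone: "compose X f e = f" if "f \<in> NG" for f
    using monoid.r_one[OF group.is_monoid[OF gG], of f] that by (simp add: G_def)
  have linv: "\<exists>g\<in>NG. compose X g f = e" if "f \<in> NG" for f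
    using group.l_inv_ex[OF gG, of f] that by (simp add: G_def)
  have ext: "f x = undefined" if "f \<in> NG" "x \<notin> X" for f x
    using sub that by (auto simp: PiE_def extensional_def)
  have mapX: "f x \<in> X" if "f \<in> NG" "x \<in> X" for f x
    using sub that by auto
  define Y where "Y = e ` X"
  have YX: "Y \<subseteq> X" using mapX eN Y_def by auto
  have eY: "e y = y" if yY: "y \<in> Y" for y
  proof -
    obtain x where x: "x \<in> X" "y = e x" using yY Y_def by auto
    have "compose X e e x = e x" using rone[OF eN] by simp
    then show ?thesis using x by (simp add: compose_def)
  qed
  have fY: "f x \<in> Y" if "f \<in> NG" "x \<in> X" for f x
  proof -
    have "compose X e f x = f x" using lone[OF that(1)] by simp
    then have "e (f x) = f x" using that by (simp add: compose_def)
    then show ?thesis unfolding Y_def using mapX[OF that] by (metis image_eqI)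
  qed
  have fe: "f (e x) = f x" if "f \<in> NG" "x \<in> X" for f x
  proof -
    have "compose X f e x = f x" using rone[OF that(1)] by simp
    then show ?thesis using that by (simp add: compose_def)
  qed
  have injY: "inj_on f Y" if fN: "f \<in> NG" for f
  proof (rule inj_onI)
    fix a b assume a: "a \<in> Y" and b: "b \<in> Y" and eq: "f a = f b"
    obtain g where g: "g \<in> NG" "compose X g f = e" using linv[OF fN] by blast
    have "compose X g f a = compose X g f b" using a b YX eq by (auto simp: compose_def)
    then have "e a = e b" using g by simp
    then show "a = b" using eY a b by simp
  qed
  have finY: "finite Y" using fin YX finite_subset by blast
  have bijY: "bij_betw f Y Y" if "f \<in> NG" for f
  proof -
    have "f ` Y \<subseteq> Y" using fY[OF that] YX by auto
    moreover have "card (f ` Y) = card Y" using card_image[OF injY[OF that]] .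
    ultimately have "f ` Y = Y" using finY by (simp add: card_subset_eq)
    then show ?thesis using injY[OF that] by (simp add: bij_betw_def)
  qed
  define r where "r f = (\<lambda>x. if x \<in> Y then f x else x)" for f :: "'a \<Rightarrow> 'a"
  have rperm: "r f permutes Y" if "f \<in> NG" for f
  proof (rule bij_imp_permutes)
    show "bij_betw (r f) Y Y"
      using bijY[OF that] by (rule bij_betw_cong[THEN iffD1, rotated]) (simp add: r_def)
    show "\<And>x. x \<notin> Y \<Longrightarrow> r f x = x" by (simp add: r_def)
  qed
  have rinj: "inj_on r NG"
  proof (rule inj_onI)
    fix f g assume f: "f \<in> NG" and g: "g \<in> NG" and eq: "r f = r g"
    show "f = g"
    proof
      fix x
      show "f x = g x"
      proof (cases "x \<in> X")
        case True
        have "e x \<in> Y" using True Y_def by auto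
        then have "f (e x) = g (e x)" using eq by (metis r_def)
        then show ?thesis using fe f g True by metis
      next
        case False then show ?thesis using ext[OF f False] ext[OF g False] by simp
      qed
    qed
  qed
  have finNG: "finite NG" using sub fin finite_subset finite_PiE by (metis finite_PiE)
  have "card NG \<le> card {p. p permutes Y}"
  proof -
    have "card (r ` NG) \<le> card {p. p permutes Y}"
      using rperm by (intro card_mono) (auto simp: finite_permutations finY)
    then show ?thesis using card_image[OF rinj] by simp
  qed
  also have "\<dots> = fact (card Y)" using card_permutations finY by blast
  finally have c1: "card NG \<le> fact (card Y)" .
  have "Y \<noteq> X"
  proof
    assume YeqX: "Y = X"
    have "NG \<subseteq> {f \<in> X \<rightarrow>\<^sub>E X. bij_betw f X X}"
      using sub bijY YeqX by auto
    then show False using nb by simp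
  qed
  then have "card Y < card X" using YX fin by (simp add: psubset_card_mono psubsetI)
  then have "card Y \<le> card X - 1" by simp
  then have "fact (card Y) \<le> (fact (card X - 1) :: nat)" by (rule fact_mono_nat)
  then show ?thesis using c1 finNG by simp
qed

theorem mainTheorem4:
  fixes X :: "'a set" and NG :: "('a \<Rightarrow> 'a) set" and n :: nat
  assumes "finite X" and "X \<noteq> {}" and "card X = n" and "n \<ge> 3"
    and "NG_group X NG"
  shows "(\<Sum>v\<in>X. ng_deg X NG v) \<le> 2 * fact n"
proof -
  note cb = card_NG_bound[OF assms(1,5)]
  have finNG: "finite NG" using cb by simp
  have mapX: "f x \<in> X" if "f \<in> NG" "x \<in> X" for f x
    using assms(5) that unfolding NG_group_def by auto
  have out: "ng_outdeg X NG v = card NG" if "v \<in> X" for v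
  proof -
    have "{a \<in> NG \<times> X. snd a = v} = NG \<times> {v}" using that by auto
    then show ?thesis by (simp add: ng_outdeg_def ng_arcs_def card_cartesian_product)
  qed
  have "(\<Sum>v\<in>X. ng_indeg X NG v) = (\<Sum>v\<in>X. \<Sum>a\<in>{a \<in> NG \<times> X. fst a (snd a) = v}. 1)"
    by (simp add: ng_indeg_def ng_arcs_def)
  also have "\<dots> = (\<Sum>a\<in>NG \<times> X. 1)"
    by (rule sum.group) (use finNG assms(1) mapX in auto)
  also have "\<dots> = card NG * card X" by (simp add: card_cartesian_product)
  finally have inn: "(\<Sum>v\<in>X. ng_indeg X NG v) = card NG * card X" .
  have "(\<Sum>v\<in>X. ng_deg X NG v) = (\<Sum>v\<in>X. ng_outdeg X NG v) + (\<Sum>v\<in>X. ng_indeg X NG v)"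
    by (simp add: ng_deg_def sum.distrib)
  also have "\<dots> = 2 * (card NG * n)" using out inn assms(3) by simp
  also have "\<dots> \<le> 2 * (fact (n - 1) * n)" using cb assms(3) by simp
  also have "\<dots> = 2 * fact n"
  proof -
    obtain m where "n = Suc m" using assms(4) by (cases n) auto
    then show ?thesis by simp
  qed
  finally show ?thesis .
qed

end
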